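(* $\chi_{alg}(K_j)=j$ for $j=2,3,4$.
   Context: Graphs are finite, loopless, with symmetric edge sets; $K_c$ is the complete graph on $c$ vertices. For finite sets with $|I|=n$, $|O|=m$ ($O=\{0,\dots,m-1\}$), let $\mathbb F(n,m)$ be the free product of $n$ copies of the cyclic group of order $m$ with generators $u_v$, $\mathbb C[\mathbb F(n,m)]$ its group $*$-algebra, $\omega=e^{2\pi i/m}$ and $e_{v,a}=\frac1m\sum_{k=0}^{m-1}(\omega^{-a}u_v)^k$. For graphs $G,H$, the graph homomorphism game has $I=V(G)$, $O=V(H)$, $\lambda(v,w,a,b)=0$ iff ($v=w$ and $a\ne b$) or ($(v,w)\in E(G)$ and $(a,b)\notin E(H)$). $\mathcal I(G,H)$ is the two-sided $*$-ideal generated by $\{e_{v,a}e_{w,b}:\lambda(v,w,a,b)=0\}$, $\mathcal A(G,H)=\mathbb C[\mathbb F(n,m)]/\mathcal I(G,H)$, and $\chi_{alg}(G)=\min\{c:\mathcal A(G,K_c)\neq0\}$. *)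

theory Defs
  imports Complex_Main "HOL-Library.Poly_Mapping"
begin

(* Words in the generators u_v (v a vertex index); the free monoid on nat. *)
datatype word = Word "nat list"

instantiation word :: monoid_add
begin
fun plus_word :: "word \<Rightarrow> word \<Rightarrow> word" where
  "plus_word (Word xs) (Word ys) = Word (xs @ ys)"
definition zero_word :: word where "zero_word = Word []"
instance
proof
  fix a b c :: word
  show "a + b + c = a + (b + c)" by (cases a; cases b; cases c) auto
  show "0 + a = a" by (cases a) (auto simp: zero_word_def)
  show "a + 0 = a" by (cases a) (auto simp: zero_word_def)
qed
end

(* The free unital associative complex algebra on generators x_0, x_1, ... *)
type_synonym falg = "word \<Rightarrow>\<^sub>0 complex"

definition gen_pow :: "nat \<Rightarrow> nat \<Rightarrow> falg" where
  "gen_pow v k = Poly_Mapping.single (Word (replicate k v)) 1"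

(* The involution of C[F(n,m)] lifted to the free algebra: x_v^* = x_v^(m-1) (= x_v^(-1)),
   conjugate-linear and antimultiplicative. *)
fun word_star :: "nat \<Rightarrow> word \<Rightarrow> word" where
  "word_star m (Word ws) = Word (concat (map (\<lambda>v. replicate (m - 1) v) (rev ws)))"

definition falg_star :: "nat \<Rightarrow> falg \<Rightarrow> falg" where
  "falg_star m p = (\<Sum>w\<in>Poly_Mapping.keys p.
       Poly_Mapping.single (word_star m w) (cnj (Poly_Mapping.lookup p w)))"

definition ideal_gen :: "('a::ring_1) set \<Rightarrow> 'a set" where
  "ideal_gen S = {\<Sum>i<(N::nat). (a::nat \<Rightarrow> 'a) i * s i * (b::nat \<Rightarrow> 'a) i | N a s b. \<forall>i<N. s i \<in> S}"

definition omega :: "nat \<Rightarrow> complex" where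
  "omega m = cis (2 * pi / real m)"

definition proj_e :: "nat \<Rightarrow> nat \<Rightarrow> nat \<Rightarrow> falg" where
  "proj_e m v a = (\<Sum>k<m. Poly_Mapping.single (Word (replicate k v))
                              ((1 / of_nat m) * (inverse (omega m) ^ (a * k))))"

(* Graphs on vertex set {0..<n} given by an edge relation *)
(* lambda(v,w,a,b) = 0 for the graph homomorphism game G -> H *)
definition lambda_zero ::
  "(nat \<Rightarrow> nat \<Rightarrow> bool) \<Rightarrow> (nat \<Rightarrow> nat \<Rightarrow> bool) \<Rightarrow> nat \<Rightarrow> nat \<Rightarrow> nat \<Rightarrow> nat \<Rightarrow> bool" where
  "lambda_zero EG EH v w a b \<longleftrightarrow> (v = w \<and> a \<noteq> b) \<or> (EG v w \<and> \<not> EH a b)"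

definition game_gens ::
  "nat \<Rightarrow> (nat \<Rightarrow> nat \<Rightarrow> bool) \<Rightarrow> nat \<Rightarrow> (nat \<Rightarrow> nat \<Rightarrow> bool) \<Rightarrow> falg set" where
  "game_gens n EG m EH = {proj_e m v a * proj_e m w b | v w a b.
       v < n \<and> w < n \<and> a < m \<and> b < m \<and> lambda_zero EG EH v w a b}"

(* Relations presenting C[F(n,m)]: u_v^m = 1 *)
definition group_rels :: "nat \<Rightarrow> nat \<Rightarrow> falg set" where
  "group_rels n m = {gen_pow v m - 1 | v. v < n}"

(* Preimage in the free algebra of the *-ideal I(G,H) of C[F(n,m)] *)
definition game_ideal ::
  "nat \<Rightarrow> (nat \<Rightarrow> nat \<Rightarrow> bool) \<Rightarrow> nat \<Rightarrow> (nat \<Rightarrow> nat \<Rightarrow> bool) \<Rightarrow> falg set" where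
  "game_ideal n EG m EH = ideal_gen (group_rels n m \<union> game_gens n EG m EH
                                     \<union> falg_star m ` game_gens n EG m EH)"

(* A(G,H) = C[F(n,m)] / I(G,H) is nonzero iff 1 is not in the ideal *)
definition game_alg_nonzero ::
  "nat \<Rightarrow> (nat \<Rightarrow> nat \<Rightarrow> bool) \<Rightarrow> nat \<Rightarrow> (nat \<Rightarrow> nat \<Rightarrow> bool) \<Rightarrow> bool" where
  "game_alg_nonzero n EG m EH \<longleftrightarrow> (1::falg) \<notin> game_ideal n EG m EH"

definition complete_edges :: "nat \<Rightarrow> nat \<Rightarrow> bool" where
  "complete_edges a b \<longleftrightarrow> a \<noteq> b"

definition chi_alg :: "nat \<Rightarrow> (nat \<Rightarrow> nat \<Rightarrow> bool) \<Rightarrow> nat" where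
  "chi_alg n EG = (LEAST c. 0 < c \<and> game_alg_nonzero n EG c complete_edges)"

end

theory Submission
  imports Defs
begin


lemma ideal_genI: "(\<forall>i<N. s i \<in> S) \<Longrightarrow> (\<Sum>i<(N::nat). a i * s i * b i) \<in> ideal_gen S"
  unfolding ideal_gen_def by blast

lemma ideal_gen_zero: "0 \<in> ideal_gen S"
  unfolding ideal_gen_def by (rule CollectI, rule exI[of _ 0]) auto

lemma ideal_gen_base: "s \<in> S \<Longrightarrow> s \<in> ideal_gen S"
  unfolding ideal_gen_def
  by (rule CollectI, rule exI[of _ 1], rule exI[of _ "\<lambda>_. 1"], rule exI[of _ "\<lambda>_. s"],
      rule exI[of _ "\<lambda>_. 1"]) auto

lemma ideal_gen_mono: "S \<subseteq> T \<Longrightarrow> ideal_gen S \<subseteq> ideal_gen T"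
  unfolding ideal_gen_def by blast

lemma ideal_gen_add:
  assumes "x \<in> ideal_gen S" "y \<in> ideal_gen S" shows "x + y \<in> ideal_gen S"
proof -
  from assms(1) obtain N :: nat and a s b where x: "x = (\<Sum>i<N. a i * s i * b i)" "\<forall>i<N. s i \<in> S"
    unfolding ideal_gen_def by blast
  from assms(2) obtain M :: nat and c t d where y: "y = (\<Sum>i<M. c i * t i * d i)" "\<forall>i<M. t i \<in> S"
    unfolding ideal_gen_def by blast
  define a' where "a' i = (if i < N then a i else c (i - N))" for i
  define s' where "s' i = (if i < N then s i else t (i - N))" for i
  define b' where "b' i = (if i < N then b i else d (i - N))" for i
  have "(\<Sum>i<N+M. a' i * s' i * b' i) = (\<Sum>i<N. a' i * s' i * b' i) + (\<Sum>i=N..<N+M. a' i * s' i * b' i)"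
    by (simp add: atLeast0LessThan[symmetric] sum.atLeastLessThan_concat)
  also have "(\<Sum>i<N. a' i * s' i * b' i) = x" using x by (simp add: a'_def s'_def b'_def)
  also have "(\<Sum>i=N..<N+M. a' i * s' i * b' i) = (\<Sum>i=0..<M. a' (i+N) * s' (i+N) * b' (i+N))"
    using sum.shift_bounds_nat_ivl[of "\<lambda>i. a' i * s' i * b' i" 0 N M] by (simp add: add.commute)
  also have "\<dots> = y" using y by (simp add: a'_def s'_def b'_def atLeast0LessThan)
  finally have e: "x + y = (\<Sum>i<N+M. a' i * s' i * b' i)" by simp
  have "\<forall>i<N+M. s' i \<in> S" using x y by (auto simp: s'_def)
  then show ?thesis unfolding ideal_gen_def using e by blast
qed

lemma ideal_gen_lmult:
  assumes "x \<in> ideal_gen S" shows "r * x \<in> ideal_gen S"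
proof -
  from assms obtain N :: nat and a s b where x: "x = (\<Sum>i<N. a i * s i * b i)" "\<forall>i<N. s i \<in> S"
    unfolding ideal_gen_def by blast
  have "r * x = (\<Sum>i<N. (\<lambda>i. r * a i) i * s i * b i)" using x by (simp add: sum_distrib_left mult.assoc)
  then show ?thesis using x ideal_genI[of N s S "\<lambda>i. r * a i" b] by simp
qed

lemma ideal_gen_rmult:
  assumes "x \<in> ideal_gen S" shows "x * r \<in> ideal_gen S"
proof -
  from assms obtain N :: nat and a s b where x: "x = (\<Sum>i<N. a i * s i * b i)" "\<forall>i<N. s i \<in> S"
    unfolding ideal_gen_def by blast
  have "x * r = (\<Sum>i<N. a i * s i * (\<lambda>i. b i * r) i)" using x by (simp add: sum_distrib_right mult.assoc)
  then show ?thesis using x ideal_genI[of N s S a "\<lambda>i. b i * r"] by simp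
qed

lemma ideal_gen_uminus: "x \<in> ideal_gen S \<Longrightarrow> - x \<in> ideal_gen S"
  using ideal_gen_lmult[of x S "-1"] by simp

lemma ideal_gen_diff: "x \<in> ideal_gen S \<Longrightarrow> y \<in> ideal_gen S \<Longrightarrow> x - y \<in> ideal_gen S"
  using ideal_gen_add[of x S "-y"] ideal_gen_uminus[of y S] by simp



fun ev :: "(nat \<Rightarrow> complex) \<Rightarrow> word \<Rightarrow> complex" where
  "ev \<chi> (Word ws) = prod_list (map \<chi> ws)"

definition L :: "(nat \<Rightarrow> complex) \<Rightarrow> falg \<Rightarrow> complex" where
  "L \<chi> p = (\<Sum>w\<in>Poly_Mapping.keys p. Poly_Mapping.lookup p w * ev \<chi> w)"

lemma L_superset:
  assumes "finite S" "Poly_Mapping.keys p \<subseteq> S"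
  shows "L \<chi> p = (\<Sum>w\<in>S. Poly_Mapping.lookup p w * ev \<chi> w)"
  unfolding L_def
  by (rule sum.mono_neutral_left) (use assms in \<open>auto simp: in_keys_iff\<close>)

lemma L_add: "L \<chi> (p + q) = L \<chi> p + L \<chi> q"
proof -
  let ?S = "Poly_Mapping.keys p \<union> Poly_Mapping.keys q"
  have "L \<chi> (p + q) = (\<Sum>w\<in>?S. Poly_Mapping.lookup (p+q) w * ev \<chi> w)"
    by (rule L_superset) (auto simp: keys_add)
  also have "\<dots> = (\<Sum>w\<in>?S. Poly_Mapping.lookup p w * ev \<chi> w) + (\<Sum>w\<in>?S. Poly_Mapping.lookup q w * ev \<chi> w)"
    by (simp add: lookup_add distrib_right sum.distrib)
  also have "\<dots> = L \<chi> p + L \<chi> q"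
    by (simp add: L_superset[symmetric])
  finally show ?thesis .
qed

lemma L_zero: "L \<chi> 0 = 0" by (simp add: L_def)

lemma L_uminus: "L \<chi> (- p) = - L \<chi> p"
  using L_add[of \<chi> p "-p"] by (simp add: L_zero add_eq_0_iff2)

lemma L_diff: "L \<chi> (p - q) = L \<chi> p - L \<chi> q"
  using L_add[of \<chi> p "-q"] L_uminus[of \<chi> q] by simp

lemma L_sum: "L \<chi> (sum f A) = (\<Sum>a\<in>A. L \<chi> (f a))"
  by (induction A rule: infinite_finite_induct) (auto simp: L_zero L_add)

lemma L_single: "L \<chi> (Poly_Mapping.single w c) = c * ev \<chi> w"
  by (cases "c = 0") (auto simp: L_def)

lemma ev_plus: "ev \<chi> (a + b) = ev \<chi> a * ev \<chi> b"
  by (cases a; cases b) auto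

lemma ev_zero: "ev \<chi> 0 = 1" by (simp add: zero_word_def)

lemma L_one: "L \<chi> 1 = 1"
  using L_single[of \<chi> 0 1] by (simp add: ev_zero)

lemma pm_expand: "p = (\<Sum>w\<in>Poly_Mapping.keys p. Poly_Mapping.single w (Poly_Mapping.lookup p w))"
  by (rule poly_mapping_eqI) (auto simp: lookup_sum lookup_single when_def in_keys_iff
      sum.delta'[where S="Poly_Mapping.keys p"])

lemma L_mult: "L \<chi> (p * q) = L \<chi> p * L \<chi> q"
proof -
  have "p * q = (\<Sum>a\<in>Poly_Mapping.keys p. \<Sum>b\<in>Poly_Mapping.keys q.
     Poly_Mapping.single a (Poly_Mapping.lookup p a) * Poly_Mapping.single b (Poly_Mapping.lookup q b))"
    apply (subst pm_expand[of p], subst pm_expand[of q])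
    by (simp add: sum_distrib_left sum_distrib_right sum.swap[of _ "Poly_Mapping.keys q"])
  then have "L \<chi> (p * q) = (\<Sum>a\<in>Poly_Mapping.keys p. \<Sum>b\<in>Poly_Mapping.keys q.
      (Poly_Mapping.lookup p a * ev \<chi> a) * (Poly_Mapping.lookup q b * ev \<chi> b))"
    by (simp add: L_sum mult_single L_single ev_plus mult_ac)
  also have "\<dots> = L \<chi> p * L \<chi> q"
    by (simp add: L_def sum_product)
  finally show ?thesis .
qed

lemma L_ideal:
  assumes "x \<in> ideal_gen S" "\<And>s. s \<in> S \<Longrightarrow> L \<chi> s = 0"
  shows "L \<chi> x = 0"
proof -
  from assms(1) obtain N :: nat and a s b where x: "x = (\<Sum>i<N. a i * s i * b i)" "\<forall>i<N. s i \<in> S"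
    unfolding ideal_gen_def by blast
  then show ?thesis using assms(2) by (simp add: L_sum L_mult)
qed



lemma omega_pow: "omega m ^ k = cis (2 * pi * real k / real m)"
  by (simp add: omega_def DeMoivre mult_ac)

lemma omega_nz: "omega m \<noteq> 0" by (simp add: omega_def)

lemma omega_pow_m: "0 < m \<Longrightarrow> omega m ^ m = 1"
  by (simp add: omega_pow)

lemma omega_pow_ne1:
  assumes "0 < k" "k < m" shows "omega m ^ k \<noteq> 1"
proof
  assume "omega m ^ k = 1"
  then have "cos (2 * pi * real k / real m) = 1"
    by (metis omega_pow one_complex.sel(1) cis.sel(1))
  then obtain n :: int where n: "2 * pi * real k / real m = of_int n * 2 * pi"
    using cos_one_2pi_int by blast
  then have "real k = n * real m" using assms by (simp add: field_simps)
  moreover have "0 < real k" "real k < 1 * real m" using assms by simp_all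
  ultimately have "0 < of_int n * real m" "of_int n * real m < 1 * real m" by simp_all
  moreover have "real m > 0" using assms by simp
  ultimately have "0 < real_of_int n" "real_of_int n < 1"
    by (simp_all add: zero_less_mult_iff mult_less_cancel_right)
  then have "0 < n" "n < 1" by simp_all
  then show False by simp
qed

lemma omega_inj:
  assumes "v < m" "a < m" "omega m ^ v = omega m ^ a" shows "v = a"
proof (rule ccontr)
  assume "v \<noteq> a"
  { fix x y :: nat assume "x < y" "y < m" "omega m ^ x = omega m ^ y"
    moreover have "omega m ^ y = omega m ^ x * omega m ^ (y - x)"
      by (metis power_add le_add_diff_inverse less_imp_le \<open>x < y\<close>)
    ultimately have "omega m ^ x * omega m ^ (y - x) = omega m ^ x * 1" by simp
    then have "omega m ^ (y - x) = 1" using omega_nz by simp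
    then have False using omega_pow_ne1[of "y - x" m] \<open>x < y\<close> \<open>y < m\<close> by auto }
  then show False using assms \<open>v \<noteq> a\<close> by (metis linorder_neqE_nat)
qed

lemma gp_zero: "(z::complex) ^ m = 1 \<Longrightarrow> z \<noteq> 1 \<Longrightarrow> (\<Sum>k<m. z ^ k) = 0"
  by (simp add: sum_gp_strict)

definition chi :: "nat \<Rightarrow> nat \<Rightarrow> complex" where "chi m v = omega m ^ v"

lemma ev_replicate: "ev \<chi> (Word (replicate k v)) = \<chi> v ^ k" by simp

lemma L_proj_e:
  assumes "0 < m" "v < m" "a < m"
  shows "L (chi m) (proj_e m v a) = (if v = a then 1 else 0)"
proof -
  define z where "z = inverse (omega m) ^ a * omega m ^ v"
  have "L (chi m) (proj_e m v a) = (\<Sum>k<m. (1 / of_nat m) * (inverse (omega m) ^ (a * k)) * chi m v ^ k)"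
    by (simp add: proj_e_def L_sum L_single)
  also have "\<dots> = (1 / of_nat m) * (\<Sum>k<m. z ^ k)"
    unfolding sum_distrib_left
  proof (rule sum.cong[OF refl])
    fix k assume "k \<in> {..<m}"
    have "z ^ k = inverse (omega m) ^ (a * k) * chi m v ^ k"
      unfolding z_def chi_def power_mult_distrib power_mult ..
    then show "1 / of_nat m * inverse (omega m) ^ (a * k) * chi m v ^ k = 1 / of_nat m * z ^ k"
      by (simp add: mult.assoc)
  qed
  also have "\<dots> = (if v = a then 1 else 0)"
  proof (cases "v = a")
    case True
    then have "z = 1" using omega_nz by (simp add: z_def power_inverse)
    then show ?thesis using True assms by simp
  next
    case False
    have "z \<noteq> 1"
    proof
      assume "z = 1"
      then have "omega m ^ v = omega m ^ a" using omega_nz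
        by (simp add: z_def power_inverse field_simps)
      then show False using omega_inj assms False by blast
    qed
    moreover have "z ^ m = 1"
    proof -
      have sw: "(x ^ p) ^ m = (x ^ m) ^ p" for x :: complex and p
        by (metis power_mult mult.commute)
      have "z ^ m = (inverse (omega m) ^ m) ^ a * (omega m ^ m) ^ v"
        unfolding z_def power_mult_distrib sw ..
      also have "\<dots> = 1" using omega_pow_m[OF assms(1)] by (simp add: power_inverse)
      finally show ?thesis .
    qed
    ultimately show ?thesis using False by (simp add: gp_zero)
  qed
  finally show ?thesis .
qed



lemma pl_concat_rep: "prod_list (map \<chi> (concat (map (\<lambda>v. replicate k v) xs))) = prod_list (map (\<lambda>v. (\<chi> v :: complex) ^ k) xs)"
  by (induction xs) auto

lemma pl_rev: "prod_list (map (g :: nat \<Rightarrow> complex) (rev xs)) = prod_list (map g xs)"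
  by (induction xs) (auto simp: mult_ac)

lemma pl_cnj: "cnj (prod_list (map \<chi> xs)) = prod_list (map (\<lambda>v. cnj (\<chi> v)) xs)"
  by (induction xs) auto

lemma ev_star:
  assumes "\<And>v. \<chi> v ^ (m - 1) = cnj (\<chi> v)"
  shows "ev \<chi> (word_star m w) = cnj (ev \<chi> w)"
proof -
  have h: "\<chi> v ^ (m - Suc 0) = cnj (\<chi> v)" for v using assms[of v] by simp
  show ?thesis by (cases w) (simp add: pl_concat_rep pl_rev pl_cnj h)
qed

lemma L_star:
  assumes "\<And>v. \<chi> v ^ (m - 1) = cnj (\<chi> v)"
  shows "L \<chi> (falg_star m p) = cnj (L \<chi> p)"
  unfolding falg_star_def L_sum L_single ev_star[OF assms] by (simp add: L_def)

lemma chi_star: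
  assumes "0 < m" shows "chi m v ^ (m - 1) = cnj (chi m v)"
proof -
  have "omega m ^ (m - 1) * omega m = omega m ^ Suc (m - 1)" by (simp only: power_Suc2)
  also have "Suc (m - 1) = m" using assms by simp
  finally have a: "omega m ^ (m - 1) * omega m = 1" using omega_pow_m[OF assms] by simp
  have b: "cnj (omega m) * omega m = 1"
    by (simp add: omega_def cis_cnj cis_mult)
  have c: "omega m ^ (m - 1) = cnj (omega m)"
    using a b omega_nz mult_cancel_right[of "omega m ^ (m - 1)" "omega m" "cnj (omega m)"] by simp
  have "chi m v ^ (m - 1) = (omega m ^ (m - 1)) ^ v"
    unfolding chi_def power_mult[symmetric] by (simp add: mult.commute)
  also have "\<dots> = cnj (chi m v)" unfolding c chi_def by simp
  finally show ?thesis .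
qed

lemma upper:
  assumes "0 < m"
  shows "game_alg_nonzero m complete_edges m complete_edges"
proof -
  have gens: "L (chi m) s = 0" if "s \<in> game_gens m complete_edges m complete_edges" for s
  proof -
    from that obtain v w a b where s: "s = proj_e m v a * proj_e m w b"
      "v < m" "w < m" "a < m" "b < m" "lambda_zero complete_edges complete_edges v w a b"
      unfolding game_gens_def by blast
    then show ?thesis
      by (auto simp: L_mult L_proj_e assms lambda_zero_def complete_edges_def)
  qed
  have "L (chi m) s = 0" if s_in: "s \<in> group_rels m m \<union> game_gens m complete_edges m complete_edges
         \<union> falg_star m ` game_gens m complete_edges m complete_edges" for s
  proof -
    consider (g) "s \<in> group_rels m m" | (h) "s \<in> game_gens m complete_edges m complete_edges"
      | (st) t where "t \<in> game_gens m complete_edges m complete_edges" "s = falg_star m t"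
      using s_in by blast
    then show ?thesis
    proof cases
      case g
      then obtain v where "s = gen_pow v m - 1" unfolding group_rels_def by blast
      moreover have "chi m v ^ m = 1"
        unfolding chi_def power_mult[symmetric] mult.commute[of v m]
        unfolding power_mult omega_pow_m[OF assms] by simp
      ultimately show ?thesis
        by (simp add: L_diff gen_pow_def L_single L_one)
    next
      case h then show ?thesis by (rule gens)
    next
      case st
      have "L (chi m) (falg_star m t) = cnj (L (chi m) t)"
        by (rule L_star) (rule chi_star[OF assms])
      then show ?thesis using gens[OF st(1)] st(2) by simp
    qed
  qed
  then have "1 \<notin> game_ideal m complete_edges m complete_edges"
    using L_ideal[of 1 "group_rels m m \<union> game_gens m complete_edges m complete_edges
         \<union> falg_star m ` game_gens m complete_edges m complete_edges" "chi m"] L_one[of "chi m"]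
    unfolding game_ideal_def by force
  then show ?thesis unfolding game_alg_nonzero_def .
qed



lemma num_comm: "(x::'r::ring_1) * numeral n = numeral n * x"
  by (metis mult_of_nat_commute of_nat_numeral)

lemma num_mid: "(x::'r::ring_1) * (numeral n * y) = numeral n * (x * y)"
  by (metis mult.assoc num_comm)

lemma t1: "4*4 - 4*x - (4*x - x) - (4 - x) = 12 - 6*(x::'r::ring_1)"
  apply (simp add: numeral_mult)
  apply (simp only: numeral_Bit0 numeral_Bit1 numeral_One distrib_right distrib_left mult_1_left mult_1_right
       right_diff_distrib left_diff_distrib)
  by (simp add: algebra_simps)

lemma comm_step:
  fixes a b c :: "'r::ring_1"
  assumes ia: "a*a = a" and ib: "b*b = b" and ic: "c*c = c" and s: "a + b + c = 4"
    and c5: "\<And>x::'r. 5 * x = 0 \<Longrightarrow> x = 0"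
  shows "a*b = b*a \<and> 4*(a*b) = 6*a"
proof -
  have "a*(a+b+c) = a*4" using s by simp
  then have "a + a*b + a*c = 4*a" by (simp add: distrib_left ia num_comm)
  then have l: "a*c = 3*a - a*b"
    apply (simp only: numeral_Bit0 numeral_Bit1 numeral_One distrib_right mult_1_left)
    by (simp add: algebra_simps)
  have "(a+b+c)*a = 4*a" using s by simp
  then have "a + b*a + c*a = 4*a" by (simp add: distrib_right ia)
  then have r: "c*a = 3*a - b*a"
    apply (simp only: numeral_Bit0 numeral_Bit1 numeral_One distrib_right mult_1_left)
    by (simp add: algebra_simps)
  have ab: "a + b = 4 - c" using s by (simp add: algebra_simps)
  have "(a+b)*(a+b) = (4-c)*(4-c)" by (simp only: ab)
  moreover have "(a+b)*(a+b) = a + a*b + b*a + b"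
    by (simp only: distrib_left distrib_right ia ib) (simp add: add_ac)
  moreover have "(4-c)*(4-c) = 4*4 - 4*c - (4*c - c)"
    by (simp only: left_diff_distrib right_diff_distrib ic num_comm[of c])
  ultimately have "a + a*b + b*a + b = 4*4 - 4*c - (4*c - c)" by simp
  then have E: "a + a*b + b*a + b = 4*4 - 4*c - (4*c - c)" .
  have "a*b + b*a = (a + a*b + b*a + b) - (a + b)" by (simp add: algebra_simps)
  also have "\<dots> = 4*4 - 4*c - (4*c - c) - (4 - c)" by (simp only: E ab)
  also have "\<dots> = 12 - 6*c" by (rule t1)
  finally have p: "a*b + b*a = 12 - 6*c" .
  have "a*(a*b + b*a) = a*(12 - 6*c)" using p by simp
  then have "a*b + a*b*a = 12*a - 6*(a*c)"
    by (simp only: distrib_left right_diff_distrib mult.assoc[symmetric] ia num_comm[of a] num_mid[of a])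
  then have m1: "a*b*a = 5*(a*b) - 6*a" unfolding l
    apply (simp only: numeral_Bit0 numeral_Bit1 numeral_One distrib_right distrib_left mult_1_left mult_1_right
       right_diff_distrib left_diff_distrib)
    by (simp add: algebra_simps)
  have "(a*b + b*a)*a = (12 - 6*c)*a" using p by simp
  then have "a*b*a + b*a = 12*a - 6*(c*a)"
    by (simp only: distrib_right left_diff_distrib mult.assoc ia)
  then have m2: "a*b*a = 5*(b*a) - 6*a" unfolding r
    apply (simp only: numeral_Bit0 numeral_Bit1 numeral_One distrib_right distrib_left mult_1_left mult_1_right
       right_diff_distrib left_diff_distrib)
    by (simp add: algebra_simps)
  have "5*(a*b - b*a) = 0" using m1 m2 by (simp add: right_diff_distrib)
  then have "a*b - b*a = 0" by (rule c5)
  then have comm: "a*b = b*a" by simp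
  have "a*b*a = a*b" using comm ia by (metis mult.assoc)
  then have "4*(a*b) = 6*a" using m1
    apply (simp only: numeral_Bit0 numeral_Bit1 numeral_One distrib_right distrib_left mult_1_left mult_1_right
       right_diff_distrib left_diff_distrib)
    by (simp add: algebra_simps)
  then show ?thesis using comm by simp
qed


lemma three_idem:
  fixes a b c :: "'r::ring_1"
  assumes ia: "a*a = a" and ib: "b*b = b" and ic: "c*c = c" and s: "a + b + c = 4"
    and c2: "\<And>x::'r. 2 * x = 0 \<Longrightarrow> x = 0"
    and c3: "\<And>x::'r. 3 * x = 0 \<Longrightarrow> x = 0"
    and c5: "\<And>x::'r. 5 * x = 0 \<Longrightarrow> x = 0"
  shows False
proof -
  have c6: "x = 0" if "6 * x = 0" for x :: 'r
  proof -
    have "2 * (3 * x) = 0" using that by (simp add: mult.assoc[symmetric])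
    then show ?thesis using c2 c3 by blast
  qed
  have s2: "b + a + c = 4" "a + c + b = 4" "c + a + b = 4" using s by (simp_all add: add_ac)
  note st1 = comm_step[OF ia ib ic s c5] and st2 = comm_step[OF ib ia ic s2(1) c5]
  note st3 = comm_step[OF ia ic ib s2(2) c5] and st4 = comm_step[OF ic ia ib s2(3) c5]
  have "6 * a = 6 * b" using st1 st2 by metis
  then have "6 * (a - b) = 0" by (simp add: right_diff_distrib)
  then have ab: "a = b" using c6 by fastforce
  have "6 * a = 6 * c" using st3 st4 by metis
  then have "6 * (a - c) = 0" by (simp add: right_diff_distrib)
  then have ac: "a = c" using c6 by fastforce
  have t: "a + a + a = 4" using s ab ac by simp
  then have "(a + a + a) * a = 4 * a" by simp
  then have "a + a + a = 4 * a" by (simp only: distrib_right ia)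
  then have "4 * a - (a + a + a) = 4 - 4" using t by simp
  then have "a = 0"
    apply (simp only: numeral_Bit0 numeral_Bit1 numeral_One distrib_right mult_1_left)
    by (simp add: algebra_simps)
  then have "(4::'r) = 0" using t by simp
  then have "2 * (2 * (1::'r)) = 0" by simp
  from c2[OF this] have "2 * (1::'r) = 0" .
  from c2[OF this] have "(1::'r) = 0" .
  then show False by simp
qed

lemma two_idem:
  fixes a b :: "'r::ring_1"
  assumes ia: "a*a = a" and ib: "b*b = b" and s: "a + b = 3"
    and c2: "\<And>x::'r. 2 * x = 0 \<Longrightarrow> x = 0"
    and c3: "\<And>x::'r. 3 * x = 0 \<Longrightarrow> x = 0"
  shows False
proof -
  have b: "b = 3 - a" using s by (simp add: algebra_simps)
  have "(3 - a) * (3 - a) = 3*3 - 3*a - (3*a - a)"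
    by (simp only: left_diff_distrib right_diff_distrib ia num_comm[of a])
  then have "3*3 - 3*a - (3*a - a) = 3 - a" using ib b by simp
  then have "3*3 - 3*a - (3*a - a) - (3 - a) = 0" by simp
  moreover have "3*3 - 3*a - (3*a - a) - (3 - a) = 6 - 4*a"
    apply (simp add: numeral_mult)
    apply (simp only: numeral_Bit0 numeral_Bit1 numeral_One distrib_right distrib_left mult_1_left mult_1_right
       right_diff_distrib left_diff_distrib)
    by (simp add: algebra_simps)
  ultimately have e: "6 = 4 * a" by simp
  then have "6 * a = 4 * a * a" by simp
  then have "6 * a = 4 * a" by (simp add: mult.assoc ia)
  then have "6 * a - 4 * a = 0" by simp
  moreover have "6 * a - 4 * a = 2 * a"
    apply (simp only: numeral_Bit0 numeral_Bit1 numeral_One distrib_right distrib_left mult_1_left mult_1_right)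
    by (simp add: algebra_simps)
  ultimately have "2 * a = 0" by simp
  then have "a = 0" by (rule c2)
  then have "2 * (3 * (1::'r)) = 0" using e by simp
  from c2[OF this] have "3 * (1::'r) = 0" .
  from c3[OF this] have "(1::'r) = 0" .
  then show False by simp
qed

lemma sum_single_nz:
  assumes "finite A" "i \<in> A" "\<And>j. j \<in> A \<Longrightarrow> j \<noteq> i \<Longrightarrow> f j = 0"
  shows "sum f A = f i"
  using assms by (simp add: sum.remove[of A i] sum.neutral)

lemma idem_sum:
  fixes P :: "nat \<Rightarrow> nat \<Rightarrow> 'r::ring_1"
  assumes sum1: "\<And>v. v < n \<Longrightarrow> (\<Sum>a<c. P v a) = 1"
    and orth: "\<And>v a b. v < n \<Longrightarrow> a < c \<Longrightarrow> b < c \<Longrightarrow> a \<noteq> b \<Longrightarrow> P v a * P v b = 0"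
    and edge: "\<And>v w a. v < n \<Longrightarrow> w < n \<Longrightarrow> a < c \<Longrightarrow> v \<noteq> w \<Longrightarrow> P v a * P w a = 0"
  shows "\<And>a. a < c \<Longrightarrow> (\<Sum>v<n. P v a) * (\<Sum>v<n. P v a) = (\<Sum>v<n. P v a)"
    and "(\<Sum>a<c. \<Sum>v<n. P v a) = of_nat n"
proof -
  have idem: "P v a * P v a = P v a" if "v < n" "a < c" for v a
  proof -
    have "P v a = P v a * (\<Sum>b<c. P v b)" using sum1 that by simp
    also have "\<dots> = (\<Sum>b<c. P v a * P v b)" by (simp add: sum_distrib_left)
    also have "\<dots> = P v a * P v a"
      by (rule sum_single_nz) (use that orth in auto)
    finally show ?thesis by simp
  qed
  show "(\<Sum>v<n. P v a) * (\<Sum>v<n. P v a) = (\<Sum>v<n. P v a)" if "a < c" for a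
  proof -
    have "(\<Sum>v<n. P v a) * (\<Sum>v<n. P v a) = (\<Sum>v<n. \<Sum>w<n. P v a * P w a)"
      by (simp only: sum_distrib_right) (simp only: sum_distrib_left)
    also have "\<dots> = (\<Sum>v<n. P v a * P v a)"
    proof (rule sum.cong[OF refl])
      fix v assume "v \<in> {..<n}"
      show "(\<Sum>w<n. P v a * P w a) = P v a * P v a"
        by (rule sum_single_nz) (use that edge \<open>v \<in> {..<n}\<close> in auto)
    qed
    also have "\<dots> = (\<Sum>v<n. P v a)" using idem that by simp
    finally show ?thesis .
  qed
  have "(\<Sum>a<c. \<Sum>v<n. P v a) = (\<Sum>v<n. \<Sum>a<c. P v a)" by (rule sum.swap)
  also have "\<dots> = (\<Sum>v<n. 1)" using sum1 by simp
  finally show "(\<Sum>a<c. \<Sum>v<n. P v a) = of_nat n" by simp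
qed



lemma single_sum: "Poly_Mapping.single k (sum f A) = (\<Sum>a\<in>A. Poly_Mapping.single k (f a))"
  by (induction A rule: infinite_finite_induct) (auto simp: single_add)

lemma proj_e_sum:
  assumes "0 < m" shows "(\<Sum>a<m. proj_e m v a) = 1"
proof -
  have inner: "(\<Sum>a<m. (1 / of_nat m) * (inverse (omega m) ^ (a * k))) = (if k = 0 then 1 else 0)"
    if "k < m" for k
  proof (cases "k = 0")
    case True then show ?thesis using assms by simp
  next
    case False
    let ?z = "inverse (omega m) ^ k"
    have "?z \<noteq> 1" using omega_pow_ne1[of k m] False that by (simp add: power_inverse)
    moreover have "?z ^ m = 1"
    proof -
      have "?z ^ m = inverse ((omega m ^ m) ^ k)"
        by (simp add: power_inverse flip: power_mult) (simp add: mult.commute)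
      then show ?thesis using omega_pow_m[OF assms] by simp
    qed
    ultimately have "(\<Sum>a<m. ?z ^ a) = 0" by (metis gp_zero)
    moreover have "(\<Sum>a<m. (1 / of_nat m) * (inverse (omega m) ^ (a * k))) = (1 / of_nat m) * (\<Sum>a<m. ?z ^ a)"
      by (simp add: sum_distrib_left power_mult mult.commute[of _ k])
    ultimately show ?thesis using False by simp
  qed
  have "(\<Sum>a<m. proj_e m v a) = (\<Sum>k<m. \<Sum>a<m. Poly_Mapping.single (Word (replicate k v))
                              ((1 / of_nat m) * (inverse (omega m) ^ (a * k))))"
    unfolding proj_e_def by (rule sum.swap)
  also have "\<dots> = (\<Sum>k<m. Poly_Mapping.single (Word (replicate k v)) (if k = 0 then 1 else 0))"
  proof (rule sum.cong[OF refl])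
    fix k assume "k \<in> {..<m}"
    then show "(\<Sum>a<m. Poly_Mapping.single (Word (replicate k v))
                              ((1 / of_nat m) * (inverse (omega m) ^ (a * k)))) =
       Poly_Mapping.single (Word (replicate k v)) (if k = 0 then 1 else 0)"
      by (simp only: single_sum[symmetric] inner lessThan_iff)
  qed
  also have "\<dots> = Poly_Mapping.single (Word (replicate 0 v)) 1"
    by (subst sum_single_nz[where i=0]) (use assms in auto)
  also have "\<dots> = 1" by (simp flip: zero_word_def)
  finally show ?thesis .
qed



lemma gen_lower:
  fixes \<phi> :: "falg \<Rightarrow> 'r::ring_1"
  assumes add: "\<And>x y. \<phi> (x + y) = \<phi> x + \<phi> y" and mul: "\<And>x y. \<phi> (x * y) = \<phi> x * \<phi> y"
    and one: "\<phi> 1 = 1"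
    and ker: "\<And>x. x \<in> game_ideal n complete_edges m complete_edges \<Longrightarrow> \<phi> x = 0"
    and m: "0 < m"
  shows "\<And>v. v < n \<Longrightarrow> (\<Sum>a<m. \<phi> (proj_e m v a)) = 1"
    and "\<And>v a b. v < n \<Longrightarrow> a < m \<Longrightarrow> b < m \<Longrightarrow> a \<noteq> b \<Longrightarrow> \<phi> (proj_e m v a) * \<phi> (proj_e m v b) = 0"
    and "\<And>v w a. v < n \<Longrightarrow> w < n \<Longrightarrow> a < m \<Longrightarrow> v \<noteq> w \<Longrightarrow> \<phi> (proj_e m v a) * \<phi> (proj_e m w a) = 0"
    and "\<And>k (x::'r). 0 < k \<Longrightarrow> of_nat k * x = 0 \<Longrightarrow> x = 0"
proof -
  have z: "\<phi> 0 = 0" using add[of 0 0] by simp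
  have s: "\<phi> (sum f A) = (\<Sum>a\<in>A. \<phi> (f a))" for f :: "nat \<Rightarrow> falg" and A
    by (induction A rule: infinite_finite_induct) (auto simp: z add)
  have gen: "\<phi> (proj_e m v a * proj_e m w b) = 0"
    if "v < n" "w < n" "a < m" "b < m" "lambda_zero complete_edges complete_edges v w a b" for v w a b
  proof -
    have "proj_e m v a * proj_e m w b \<in> game_gens n complete_edges m complete_edges"
      unfolding game_gens_def using that by blast
    then have "proj_e m v a * proj_e m w b \<in> game_ideal n complete_edges m complete_edges"
      unfolding game_ideal_def by (intro ideal_gen_base) blast
    then show ?thesis by (rule ker)
  qed
  show "(\<Sum>a<m. \<phi> (proj_e m v a)) = 1" if "v < n" for v
    using proj_e_sum[OF m, of v] s one by metis
  show "\<phi> (proj_e m v a) * \<phi> (proj_e m v b) = 0" if "v < n" "a < m" "b < m" "a \<noteq> b" for v a b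
    using gen[of v v a b] that by (simp add: mul lambda_zero_def)
  show "\<phi> (proj_e m v a) * \<phi> (proj_e m w a) = 0" if "v < n" "w < n" "a < m" "v \<noteq> w" for v w a
    using gen[of v w a a] that by (simp add: mul lambda_zero_def complete_edges_def)
  show "x = 0" if "0 < k" "of_nat k * x = 0" for k and x :: 'r
  proof -
    have on: "\<phi> (of_nat j) = of_nat j" for j
      by (induction j) (simp_all add: z add one)
    have "Poly_Mapping.single 0 (1 / of_nat k) * (of_nat k :: falg) = 1"
      using that(1) by (simp add: mult_single flip: single_of_nat)
    then have c: "\<phi> (Poly_Mapping.single 0 (1 / of_nat k)) * of_nat k = 1"
      using mul one on by metis
    have "x = \<phi> (Poly_Mapping.single 0 (1 / of_nat k)) * of_nat k * x" using c by simp
    also have "\<dots> = 0" using that(2) by (simp add: mult.assoc)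
    finally show ?thesis .
  qed
qed

definition Jid :: "nat \<Rightarrow> nat \<Rightarrow> falg set" where
  "Jid n m = (if (1::falg) \<in> game_ideal n complete_edges m complete_edges then {0}
              else game_ideal n complete_edges m complete_edges)"

lemma Jid_zero: "0 \<in> Jid n m"
  by (simp add: Jid_def game_ideal_def ideal_gen_zero)
lemma Jid_add: "x \<in> Jid n m \<Longrightarrow> y \<in> Jid n m \<Longrightarrow> x + y \<in> Jid n m"
  by (auto simp: Jid_def game_ideal_def ideal_gen_add split: if_splits)
lemma Jid_uminus: "x \<in> Jid n m \<Longrightarrow> - x \<in> Jid n m"
  by (auto simp: Jid_def game_ideal_def ideal_gen_uminus split: if_splits)
lemma Jid_diff: "x \<in> Jid n m \<Longrightarrow> y \<in> Jid n m \<Longrightarrow> x - y \<in> Jid n m"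
  by (auto simp: Jid_def game_ideal_def ideal_gen_diff split: if_splits)
lemma Jid_lmult: "x \<in> Jid n m \<Longrightarrow> r * x \<in> Jid n m"
  by (auto simp: Jid_def game_ideal_def ideal_gen_lmult split: if_splits)
lemma Jid_rmult: "x \<in> Jid n m \<Longrightarrow> x * r \<in> Jid n m"
  by (auto simp: Jid_def game_ideal_def ideal_gen_rmult split: if_splits)
lemma Jid_one: "(1::falg) \<notin> Jid n m"
  by (auto simp: Jid_def)

lemma Jid_equivp: "equivp (\<lambda>x y. x - y \<in> Jid n m)"
proof (rule equivpI)
  show "reflp (\<lambda>x y. x - y \<in> Jid n m)" by (rule reflpI) (simp add: Jid_zero)
  show "symp (\<lambda>x y. x - y \<in> Jid n m)"
  proof (rule sympI)
    fix x y :: falg assume "x - y \<in> Jid n m"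
    then have "- (x - y) \<in> Jid n m" by (rule Jid_uminus)
    then show "y - x \<in> Jid n m" by simp
  qed
  show "transp (\<lambda>x y. x - y \<in> Jid n m)"
  proof (rule transpI)
    fix x y z :: falg assume "x - y \<in> Jid n m" "y - z \<in> Jid n m"
    then have "(x - y) + (y - z) \<in> Jid n m" by (rule Jid_add)
    then show "x - z \<in> Jid n m" by simp
  qed
qed

lemma Jid_mult_resp: "x - x' \<in> Jid n m \<Longrightarrow> y - y' \<in> Jid n m \<Longrightarrow> x * y - x' * y' \<in> Jid n m"
proof -
  assume a: "x - x' \<in> Jid n m" "y - y' \<in> Jid n m"
  have "x * y - x' * y' = (x - x') * y + x' * (y - y')" by (simp add: algebra_simps)
  then show ?thesis using a Jid_add Jid_lmult Jid_rmult by metis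
qed

lemma Jid_add_resp: "x - x' \<in> Jid n m \<Longrightarrow> y - y' \<in> Jid n m \<Longrightarrow> (x + y) - (x' + y') \<in> Jid n m"
proof -
  assume a: "x - x' \<in> Jid n m" "y - y' \<in> Jid n m"
  have "(x + y) - (x' + y') = (x - x') + (y - y')" by (simp add: algebra_simps)
  then show ?thesis using a Jid_add by metis
qed

lemma Jid_diff_resp: "x - x' \<in> Jid n m \<Longrightarrow> y - y' \<in> Jid n m \<Longrightarrow> (x - y) - (x' - y') \<in> Jid n m"
proof -
  assume a: "x - x' \<in> Jid n m" "y - y' \<in> Jid n m"
  have "(x - y) - (x' - y') = (x - x') - (y - y')" by (simp add: algebra_simps)
  then show ?thesis using a Jid_diff by metis
qed

lemma Jid_uminus_resp: "x - x' \<in> Jid n m \<Longrightarrow> (- x) - (- x') \<in> Jid n m"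
proof -
  assume "x - x' \<in> Jid n m"
  then have "- (x - x') \<in> Jid n m" by (rule Jid_uminus)
  then show ?thesis by (simp add: algebra_simps)
qed

quotient_type q43 = falg / "\<lambda>x y. x - y \<in> Jid 4 3"
  by (rule Jid_equivp)

instantiation q43 :: ring_1
begin
lift_definition zero_q43 :: q43 is "0" .
lift_definition one_q43 :: q43 is "1" .
lift_definition plus_q43 :: "q43 \<Rightarrow> q43 \<Rightarrow> q43" is "(+)" by (rule Jid_add_resp)
lift_definition minus_q43 :: "q43 \<Rightarrow> q43 \<Rightarrow> q43" is "(-)" by (rule Jid_diff_resp)
lift_definition uminus_q43 :: "q43 \<Rightarrow> q43" is "uminus" by (rule Jid_uminus_resp)
lift_definition times_q43 :: "q43 \<Rightarrow> q43 \<Rightarrow> q43" is "(*)" by (rule Jid_mult_resp)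
instance
proof
  fix a b c :: q43
  show "a + b + c = a + (b + c)" by transfer (simp add: Jid_zero algebra_simps)
  show "a + b = b + a" by transfer (simp add: Jid_zero algebra_simps)
  show "0 + a = a" by transfer (simp add: Jid_zero)
  show "- a + a = 0" by transfer (simp add: Jid_zero)
  show "a - b = a + - b" by transfer (simp add: Jid_zero)
  show "a * b * c = a * (b * c)" by transfer (simp add: Jid_zero algebra_simps)
  show "(a + b) * c = a * c + b * c" by transfer (simp add: Jid_zero algebra_simps)
  show "a * (b + c) = a * b + a * c" by transfer (simp add: Jid_zero algebra_simps)
  show "1 * a = a" by transfer (simp add: Jid_zero)
  show "a * 1 = a" by transfer (simp add: Jid_zero)
  show "(0::q43) \<noteq> 1" by transfer (metis Jid_uminus Jid_one diff_0 minus_minus)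
qed
end

lemma q43_hom:
  "abs_q43 (x + y) = abs_q43 x + abs_q43 y"
  "abs_q43 (x * y) = abs_q43 x * abs_q43 y"
  "abs_q43 1 = 1"
  by (simp_all add: plus_q43.abs_eq times_q43.abs_eq one_q43.abs_eq)

lemma q43_ker: "x \<in> Jid 4 3 \<Longrightarrow> abs_q43 x = 0"
  by (simp add: zero_q43.abs_eq q43.abs_eq_iff)

quotient_type q32 = falg / "\<lambda>x y. x - y \<in> Jid 3 2"
  by (rule Jid_equivp)

instantiation q32 :: ring_1
begin
lift_definition zero_q32 :: q32 is "0" .
lift_definition one_q32 :: q32 is "1" .
lift_definition plus_q32 :: "q32 \<Rightarrow> q32 \<Rightarrow> q32" is "(+)" by (rule Jid_add_resp)
lift_definition minus_q32 :: "q32 \<Rightarrow> q32 \<Rightarrow> q32" is "(-)" by (rule Jid_diff_resp)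
lift_definition uminus_q32 :: "q32 \<Rightarrow> q32" is "uminus" by (rule Jid_uminus_resp)
lift_definition times_q32 :: "q32 \<Rightarrow> q32 \<Rightarrow> q32" is "(*)" by (rule Jid_mult_resp)
instance
proof
  fix a b c :: q32
  show "a + b + c = a + (b + c)" by transfer (simp add: Jid_zero algebra_simps)
  show "a + b = b + a" by transfer (simp add: Jid_zero algebra_simps)
  show "0 + a = a" by transfer (simp add: Jid_zero)
  show "- a + a = 0" by transfer (simp add: Jid_zero)
  show "a - b = a + - b" by transfer (simp add: Jid_zero)
  show "a * b * c = a * (b * c)" by transfer (simp add: Jid_zero algebra_simps)
  show "(a + b) * c = a * c + b * c" by transfer (simp add: Jid_zero algebra_simps)
  show "a * (b + c) = a * b + a * c" by transfer (simp add: Jid_zero algebra_simps)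
  show "1 * a = a" by transfer (simp add: Jid_zero)
  show "a * 1 = a" by transfer (simp add: Jid_zero)
  show "(0::q32) \<noteq> 1" by transfer (metis Jid_uminus Jid_one diff_0 minus_minus)
qed
end

lemma q32_hom:
  "abs_q32 (x + y) = abs_q32 x + abs_q32 y"
  "abs_q32 (x * y) = abs_q32 x * abs_q32 y"
  "abs_q32 1 = 1"
  by (simp_all add: plus_q32.abs_eq times_q32.abs_eq one_q32.abs_eq)

lemma q32_ker: "x \<in> Jid 3 2 \<Longrightarrow> abs_q32 x = 0"
  by (simp add: zero_q32.abs_eq q32.abs_eq_iff)



lemma lower43: "\<not> game_alg_nonzero 4 complete_edges 3 complete_edges"
proof
  assume "game_alg_nonzero 4 complete_edges 3 complete_edges"
  then have J: "Jid 4 3 = game_ideal 4 complete_edges 3 complete_edges"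
    by (simp add: game_alg_nonzero_def Jid_def)
  define P where "P v a = abs_q43 (proj_e 3 v a)" for v a
  have ker: "\<And>x. x \<in> game_ideal 4 complete_edges 3 complete_edges \<Longrightarrow> abs_q43 x = 0"
    using q43_ker J by simp
  note gl = gen_lower[of abs_q43 4 3, OF q43_hom(1) q43_hom(2) q43_hom(3) ker, simplified]
  have idm: "\<And>a. a < 3 \<Longrightarrow> (\<Sum>v<4. P v a) * (\<Sum>v<4. P v a) = (\<Sum>v<4. P v a)"
    "(\<Sum>a<3. \<Sum>v<4. P v a) = of_nat 4"
    using idem_sum[where n=4 and c=3 and P=P] gl(1,2,3) unfolding P_def by blast+
  have c: "\<And>x::q43. of_nat k * x = 0 \<Longrightarrow> x = 0" if "0 < k" for k
    using gl(4) that by blast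
  have c2: "\<And>x::q43. 2 * x = 0 \<Longrightarrow> x = 0" using c[of 2] by simp
  have c3: "\<And>x::q43. 3 * x = 0 \<Longrightarrow> x = 0" using c[of 3] by simp
  have c5: "\<And>x::q43. 5 * x = 0 \<Longrightarrow> x = 0" using c[of 5] by simp
  have s: "(\<Sum>v<4. P v 0) + (\<Sum>v<4. P v 1) + (\<Sum>v<4. P v 2) = 4"
    using idm(2) by (simp add: eval_nat_numeral add.assoc)
  show False
    by (rule three_idem[OF idm(1)[of 0] idm(1)[of 1] idm(1)[of 2] s c2 c3 c5]) simp_all
qed

lemma lower32: "\<not> game_alg_nonzero 3 complete_edges 2 complete_edges"
proof
  assume "game_alg_nonzero 3 complete_edges 2 complete_edges"
  then have J: "Jid 3 2 = game_ideal 3 complete_edges 2 complete_edges"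
    by (simp add: game_alg_nonzero_def Jid_def)
  define P where "P v a = abs_q32 (proj_e 2 v a)" for v a
  have ker: "\<And>x. x \<in> game_ideal 3 complete_edges 2 complete_edges \<Longrightarrow> abs_q32 x = 0"
    using q32_ker J by simp
  note gl = gen_lower[of abs_q32 3 2, OF q32_hom(1) q32_hom(2) q32_hom(3) ker, simplified]
  have idm: "\<And>a. a < 2 \<Longrightarrow> (\<Sum>v<3. P v a) * (\<Sum>v<3. P v a) = (\<Sum>v<3. P v a)"
    "(\<Sum>a<2. \<Sum>v<3. P v a) = of_nat 3"
    using idem_sum[where n=3 and c=2 and P=P] gl(1,2,3) unfolding P_def by blast+
  have c: "\<And>x::q32. of_nat k * x = 0 \<Longrightarrow> x = 0" if "0 < k" for k
    using gl(4) that by blast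
  have c2: "\<And>x::q32. 2 * x = 0 \<Longrightarrow> x = 0" using c[of 2] by simp
  have c3: "\<And>x::q32. 3 * x = 0 \<Longrightarrow> x = 0" using c[of 3] by simp
  have s: "(\<Sum>v<3. P v 0) + (\<Sum>v<3. P v 1) = 3"
    using idm(2) by (simp add: eval_nat_numeral)
  show False
    by (rule two_idem[OF idm(1)[of 0] idm(1)[of 1] s c2 c3]) simp_all
qed

lemma lower42: "\<not> game_alg_nonzero 4 complete_edges 2 complete_edges"
proof -
  have "group_rels 3 2 \<subseteq> group_rels 4 2" unfolding group_rels_def by auto
  moreover have "game_gens 3 complete_edges 2 complete_edges \<subseteq> game_gens 4 complete_edges 2 complete_edges"
    unfolding game_gens_def by fastforce
  ultimately have "game_ideal 3 complete_edges 2 complete_edges \<subseteq> game_ideal 4 complete_edges 2 complete_edges"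
    unfolding game_ideal_def by (intro ideal_gen_mono) blast
  then show ?thesis using lower32 unfolding game_alg_nonzero_def by blast
qed

lemma lower1:
  assumes "2 \<le> n" shows "\<not> game_alg_nonzero n complete_edges 1 complete_edges"
proof -
  have p: "proj_e 1 v 0 = 1" for v using proj_e_sum[of 1 v] by simp
  have "proj_e 1 0 0 * proj_e 1 1 0 \<in> game_gens n complete_edges 1 complete_edges"
    unfolding game_gens_def lambda_zero_def complete_edges_def using assms by force
  then have "(1::falg) \<in> game_ideal n complete_edges 1 complete_edges"
    unfolding game_ideal_def p by (intro ideal_gen_base) simp
  then show ?thesis unfolding game_alg_nonzero_def by simp
qed

theorem mainTheorem4:
  shows "\<forall>j\<in>{2, 3, 4::nat}. chi_alg j complete_edges = j"
proof -
  have up: "game_alg_nonzero j complete_edges j complete_edges" if "0 < j" for j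
    using upper that by blast
  have low: "\<not> game_alg_nonzero j complete_edges c complete_edges"
    if "j \<in> {2, 3, 4}" "0 < c" "c < j" for j c
  proof -
    have "c = 1 \<or> (c = 2 \<and> j = 3) \<or> (c = 2 \<and> j = 4) \<or> (c = 3 \<and> j = 4)" using that by auto
    then show ?thesis using that lower1 lower32 lower42 lower43 by auto
  qed
  show ?thesis
  proof
    fix j :: nat assume j: "j \<in> {2, 3, 4}"
    show "chi_alg j complete_edges = j"
      unfolding chi_alg_def
    proof (rule Least_equality)
      show "0 < j \<and> game_alg_nonzero j complete_edges j complete_edges" using j up by auto
      show "j \<le> c" if "0 < c \<and> game_alg_nonzero j complete_edges c complete_edges" for c
        using low[OF j, of c] that by force
    qed
  qed
qed

end
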